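(* Consider the convex problem of minimizing $F(\beta)=(n^{(0)})^{-1/2}\sum_{t=1}^k\|Y^{(t)}-\mathbf X^{(t)}\beta^{(t)}\|+\lambda\sum_{l=1}^p\|\beta_{(l)}\|$ over $\beta\in\mathbb R^{pk}$, solved by the scaled iterative thresholding algorithm described in the context with rescaling constant $K_0>0$. Assume $\lambda>0$ and $\min_{1\le t\le k}\inf_{\zeta\in A^t}\|\mathbf X^{(t)}\zeta-Y^{(t)}\|>c_0$ for some constant $c_0>0$, where $A^t=\{v\beta(m)^{(t)}+(1-v)\beta(m+1)^{(t)}:v\in[0,1],\ m=0,1,\dots\}$. Then for large enough $K_0$, the sequence of iterates $\beta(m)$ converges to the global optimum (a global minimizer) of the problem.
   Context: Data: for $t=1,\dots,k$, $Y^{(t)}\in\mathbb R^{n^{(t)}}$ and $\mathbf X^{(t)}\in\mathbb R^{n^{(t)}\times p}$; $n^{(0)}=\min_tn^{(t)}$. For $\beta=(\beta^{(1)\prime},\dots,\beta^{(k)\prime})'\in\mathbb R^{pk}$ with $\beta^{(t)}\in\mathbb R^p$, $\beta_{(l)}=(\beta^{(1)}_l,\dots,\beta^{(k)}_l)'\in\mathbb R^k$. $\|\cdot\|$ is the Euclidean norm. Algorithm: Step 1 (rescaling): replace $Y^{(t)}$ by $Y^{(t)}/K_0$, $\mathbf X^{(t)}$ by $\mathbf X^{(t)}/K_0$ for all $t$, and $\lambda$ by $\lambda/K_0$ (this does not change the minimizer); below $Y^{(t)},\mathbf X^{(t)},\lambda$ denote the rescaled quantities. Step 2 (iteration): from an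 initial $\beta(0)\in\mathbb R^{pk}$, given $\beta(m)$ define $R(m)^{(t)}=(\mathbf X^{(t)})'(\mathbf X^{(t)}\beta(m)^{(t)}-Y^{(t)})/[(n^{(0)})^{1/2}\|\mathbf X^{(t)}\beta(m)^{(t)}-Y^{(t)}\|]\in\mathbb R^p$, stack them into $R(m)\in\mathbb R^{pk}$ with groups $R(m)_{(l)}\in\mathbb R^k$ as for $\beta$, let $A(m)=\sum_{t=1}^k[(n^{(0)})^{1/2}\|\mathbf X^{(t)}\beta(m)^{(t)}-Y^{(t)}\|]^{-1}$, and set $\beta(m+1)_{(l)}=\vec\Theta\big(\beta(m)_{(l)}-R(m)_{(l)}/A(m);\lambda/A(m)\big)$ for $l=1,\dots,p$, where $\vec\Theta(0;\lambda)=0$ and $\vec\Theta(a;\lambda)=a\,(\|a\|-\lambda)_+/\|a\|$ for $a\ne0$ (multivariate soft-thresholding). *)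

theory Defs
  imports "HOL-Analysis.Analysis"
begin

text \<open>Tasks are indexed by t < k, observations of task t by i < n t,
  covariates by j < p (0-based). Design: X t i j, response: Y t i.
  A coefficient vector beta in R^{pk} is a function b with b t l = beta^{(t)}_l.\<close>

definition n0 :: "nat \<Rightarrow> (nat \<Rightarrow> nat) \<Rightarrow> nat" where
  "n0 k n = Min (n ` {..<k})"

definition res_norm ::
  "nat \<Rightarrow> (nat \<Rightarrow> nat) \<Rightarrow> (nat \<Rightarrow> nat \<Rightarrow> nat \<Rightarrow> real) \<Rightarrow> (nat \<Rightarrow> nat \<Rightarrow> real)
   \<Rightarrow> nat \<Rightarrow> (nat \<Rightarrow> real) \<Rightarrow> real" where
  "res_norm p n X Y t z = sqrt (\<Sum>i<n t. ((\<Sum>j<p. X t i j * z j) - Y t i)^2)"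

definition objective ::
  "nat \<Rightarrow> nat \<Rightarrow> (nat \<Rightarrow> nat) \<Rightarrow> (nat \<Rightarrow> nat \<Rightarrow> nat \<Rightarrow> real) \<Rightarrow> (nat \<Rightarrow> nat \<Rightarrow> real)
   \<Rightarrow> real \<Rightarrow> (nat \<Rightarrow> nat \<Rightarrow> real) \<Rightarrow> real" where
  "objective k p n X Y lam b =
     (\<Sum>t<k. res_norm p n X Y t (b t)) / sqrt (real (n0 k n))
     + lam * (\<Sum>l<p. sqrt (\<Sum>t<k. (b t l)^2))"

definition soft_thr :: "nat \<Rightarrow> (nat \<Rightarrow> real) \<Rightarrow> real \<Rightarrow> nat \<Rightarrow> real" where
  "soft_thr k a lam t =
     (let na = sqrt (\<Sum>s<k. (a s)^2) in
      if na = 0 then 0 else a t * max (na - lam) 0 / na)"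

text \<open>One iteration (Step 2) on data X, Y, lam (already rescaled).\<close>
definition sit_step ::
  "nat \<Rightarrow> nat \<Rightarrow> (nat \<Rightarrow> nat) \<Rightarrow> (nat \<Rightarrow> nat \<Rightarrow> nat \<Rightarrow> real) \<Rightarrow> (nat \<Rightarrow> nat \<Rightarrow> real)
   \<Rightarrow> real \<Rightarrow> (nat \<Rightarrow> nat \<Rightarrow> real) \<Rightarrow> (nat \<Rightarrow> nat \<Rightarrow> real)" where
  "sit_step k p n X Y lam b =
     (let r = (\<lambda>t. sqrt (real (n0 k n)) * res_norm p n X Y t (b t));
          R = (\<lambda>t l. (\<Sum>i<n t. X t i l * ((\<Sum>j<p. X t i j * b t j) - Y t i)) / r t);
          A = (\<Sum>t<k. 1 / r t)
      in (\<lambda>t l. if t < k \<and> l < p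
                 then soft_thr k (\<lambda>s. b s l - R s l / A) (lam / A) t
                 else 0))"

definition sit_iter ::
  "nat \<Rightarrow> nat \<Rightarrow> (nat \<Rightarrow> nat) \<Rightarrow> (nat \<Rightarrow> nat \<Rightarrow> nat \<Rightarrow> real) \<Rightarrow> (nat \<Rightarrow> nat \<Rightarrow> real)
   \<Rightarrow> real \<Rightarrow> real \<Rightarrow> (nat \<Rightarrow> nat \<Rightarrow> real) \<Rightarrow> nat \<Rightarrow> (nat \<Rightarrow> nat \<Rightarrow> real)" where
  "sit_iter k p n X Y lam K0 b0 m =
     (sit_step k p n (\<lambda>t i j. X t i j / K0) (\<lambda>t i. Y t i / K0) (lam / K0) ^^ m) b0"

definition seg_set :: "(nat \<Rightarrow> nat \<Rightarrow> nat \<Rightarrow> real) \<Rightarrow> nat \<Rightarrow> (nat \<Rightarrow> real) set" where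
  "seg_set beta t = {(\<lambda>j. v * beta m t j + (1 - v) * beta (Suc m) t j) | v m. v \<in> {0..1}}"

end

theory Submission
  imports Defs
begin


lemma cs_sumN:
  fixes x a :: "nat \<Rightarrow> real"
  shows "(\<Sum>t<k. x t * a t) \<le> sqrt (\<Sum>t<k. (x t)^2) * sqrt (\<Sum>t<k. (a t)^2)"
proof -
  have "(\<Sum>t<k. x t * a t) \<le> (\<Sum>t<k. \<bar>x t\<bar> * \<bar>a t\<bar>)"
    by (intro sum_mono) (metis abs_ge_self abs_mult)
  also have "\<dots> \<le> L2_set x {..<k} * L2_set a {..<k}" by (rule L2_set_mult_ineq)
  finally show ?thesis by (simp add: L2_set_def)
qed

lemma G_lower:
  fixes u w :: "nat \<Rightarrow> real"
  assumes pos: "sqrt (\<Sum>i<N. (u i)^2) > 0"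
  shows "sqrt (\<Sum>i<N. (u i)^2) + (\<Sum>i<N. u i * w i) / sqrt (\<Sum>i<N. (u i)^2) \<le> sqrt (\<Sum>i<N. (u i + w i)^2)"
proof -
  define a where "a = sqrt (\<Sum>i<N. (u i)^2)"
  have "(\<Sum>i<N. u i * (u i + w i)) \<le> a * sqrt (\<Sum>i<N. (u i + w i)^2)"
    unfolding a_def by (rule cs_sumN)
  moreover have "(\<Sum>i<N. u i * (u i + w i)) = a^2 + (\<Sum>i<N. u i * w i)"
    unfolding a_def by (simp add: sum_nonneg distrib_left sum.distrib power2_eq_square)
  ultimately have "a^2 + (\<Sum>i<N. u i * w i) \<le> a * sqrt (\<Sum>i<N. (u i + w i)^2)" by simp
  hence "(a^2 + (\<Sum>i<N. u i * w i)) / a \<le> sqrt (\<Sum>i<N. (u i + w i)^2)"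
    using pos a_def by (simp add: divide_le_eq mult.commute)
  moreover have "(a^2 + (\<Sum>i<N. u i * w i)) / a = a + (\<Sum>i<N. u i * w i) / a"
  proof -
    have "a > 0" using pos a_def by simp
    thus ?thesis by (simp add: power2_eq_square add_divide_distrib)
  qed
  ultimately show ?thesis unfolding a_def by simp
qed

lemma G_upper:
  fixes u w :: "nat \<Rightarrow> real"
  assumes pos: "sqrt (\<Sum>i<N. (u i)^2) > 0"
  shows "sqrt (\<Sum>i<N. (u i + w i)^2) \<le> sqrt (\<Sum>i<N. (u i)^2) + (\<Sum>i<N. u i * w i) / sqrt (\<Sum>i<N. (u i)^2)
          + (\<Sum>i<N. (w i)^2) / (2 * sqrt (\<Sum>i<N. (u i)^2))"
proof -
  define a where "a = sqrt (\<Sum>i<N. (u i)^2)"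
  define c where "c = sqrt (\<Sum>i<N. (u i + w i)^2)"
  have a2: "a^2 = (\<Sum>i<N. (u i)^2)" unfolding a_def by (simp add: sum_nonneg)
  have c2: "c^2 = (\<Sum>i<N. (u i)^2) + 2 * (\<Sum>i<N. u i * w i) + (\<Sum>i<N. (w i)^2)"
  proof -
    have "c^2 = (\<Sum>i<N. (u i + w i)^2)" unfolding c_def by (simp add: sum_nonneg)
    also have "\<dots> = (\<Sum>i<N. (u i)^2 + 2 * (u i * w i) + (w i)^2)" by (intro sum.cong refl) (simp add: power2_sum)
    also have "\<dots> = (\<Sum>i<N. (u i)^2) + 2 * (\<Sum>i<N. u i * w i) + (\<Sum>i<N. (w i)^2)"
      by (simp add: sum.distrib sum_distrib_left)
    finally show ?thesis .
  qed
  have "0 \<le> (c - a)^2" by simp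
  hence "2 * a * c \<le> a^2 + c^2" by (simp add: power2_diff mult_ac)
  hence "2 * a * c \<le> 2 * a^2 + 2 * (\<Sum>i<N. u i * w i) + (\<Sum>i<N. (w i)^2)" using a2 c2 by simp
  hence "c \<le> (2 * a^2 + 2 * (\<Sum>i<N. u i * w i) + (\<Sum>i<N. (w i)^2)) / (2 * a)"
    using pos a_def by (simp add: le_divide_eq mult.commute mult.left_commute)
  also have "\<dots> = a + (\<Sum>i<N. u i * w i) / a + (\<Sum>i<N. (w i)^2) / (2 * a)"
    using pos a_def by (simp add: power2_eq_square field_simps)
  finally show ?thesis unfolding a_def c_def .
qed

lemma frob:
  fixes M :: "nat \<Rightarrow> nat \<Rightarrow> real" and d :: "nat \<Rightarrow> real"
  shows "(\<Sum>i<N. (\<Sum>j<p. M i j * d j)^2) \<le> (\<Sum>i<N. \<Sum>j<p. (M i j)^2) * (\<Sum>j<p. (d j)^2)"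
proof -
  have "\<And>i. (\<Sum>j<p. M i j * d j)^2 \<le> (\<Sum>j<p. (M i j)^2) * (\<Sum>j<p. (d j)^2)"
  proof -
    fix i
    have "\<bar>\<Sum>j<p. M i j * d j\<bar> \<le> (\<Sum>j<p. \<bar>M i j\<bar> * \<bar>d j\<bar>)"
      by (metis (no_types, lifting) abs_mult sum.cong sum_abs)
    also have "\<dots> \<le> L2_set (M i) {..<p} * L2_set d {..<p}" by (rule L2_set_mult_ineq)
    finally have h: "\<bar>\<Sum>j<p. M i j * d j\<bar> \<le> L2_set (M i) {..<p} * L2_set d {..<p}" .
    have "(\<Sum>j<p. M i j * d j)^2 = \<bar>\<Sum>j<p. M i j * d j\<bar>^2" by simp
    also have "\<dots> \<le> (L2_set (M i) {..<p} * L2_set d {..<p})^2"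
      by (rule power_mono[OF h]) simp
    also have "\<dots> = (\<Sum>j<p. (M i j)^2) * (\<Sum>j<p. (d j)^2)"
      by (simp add: power_mult_distrib L2_set_def sum_nonneg)
    finally show "(\<Sum>j<p. M i j * d j)^2 \<le> (\<Sum>j<p. (M i j)^2) * (\<Sum>j<p. (d j)^2)" .
  qed
  hence "(\<Sum>i<N. (\<Sum>j<p. M i j * d j)^2) \<le> (\<Sum>i<N. (\<Sum>j<p. (M i j)^2) * (\<Sum>j<p. (d j)^2))"
    by (rule sum_mono)
  also have "\<dots> = (\<Sum>i<N. \<Sum>j<p. (M i j)^2) * (\<Sum>j<p. (d j)^2)" by (simp add: sum_distrib_right)
  finally show ?thesis .
qed

lemma swap_sum:
  fixes M :: "nat \<Rightarrow> nat \<Rightarrow> real" and d u :: "nat \<Rightarrow> real"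
  shows "(\<Sum>i<N. u i * (\<Sum>j<p. M i j * d j)) = (\<Sum>j<p. d j * (\<Sum>i<N. M i j * u i))"
  by (simp add: sum_distrib_left sum.swap[of _ "{..<N}"] mult_ac)

lemma prox_group:
  fixes x a :: "nat \<Rightarrow> real" and tau :: real and k :: nat
  assumes tau: "0 \<le> tau"
  defines "y \<equiv> soft_thr k a tau"
  shows "(\<Sum>t<k. (x t - y t)^2)/2 + (\<Sum>t<k. (y t - a t)^2)/2 + tau * sqrt (\<Sum>t<k. (y t)^2)
         \<le> (\<Sum>t<k. (x t - a t)^2)/2 + tau * sqrt (\<Sum>t<k. (x t)^2)"
proof -
  define na where "na = sqrt (\<Sum>s<k. (a s)^2)"
  define nx where "nx = sqrt (\<Sum>s<k. (x s)^2)"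
  have na0: "na \<ge> 0" unfolding na_def by (simp add: sum_nonneg)
  have nx0: "nx \<ge> 0" unfolding nx_def by (simp add: sum_nonneg)
  have cs: "(\<Sum>t<k. x t * a t) \<le> nx * na" unfolding nx_def na_def by (rule cs_sumN)
  have id: "\<And>t. (x t - a t)^2 = (x t - y t)^2 + 2 * ((x t - y t) * (y t - a t)) + (y t - a t)^2"
    by (simp add: power2_eq_square algebra_simps)
  have "(\<Sum>t<k. (x t - a t)^2) = (\<Sum>t<k. (x t - y t)^2) + 2 * (\<Sum>t<k. (x t - y t) * (y t - a t)) + (\<Sum>t<k. (y t - a t)^2)"
    by (simp add: id sum.distrib sum_distrib_left)
  moreover have key: "0 \<le> (\<Sum>t<k. (x t - y t) * (y t - a t)) + tau * nx - tau * sqrt (\<Sum>t<k. (y t)^2)"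
  proof (cases "na \<le> tau")
    case True
    have y0: "\<And>t. y t = 0" using True unfolding y_def soft_thr_def Let_def na_def[symmetric] by auto
    have "(\<Sum>t<k. (x t - y t) * (y t - a t)) = - (\<Sum>t<k. x t * a t)"
      by (simp add: y0 sum_negf)
    moreover have "nx * na \<le> tau * nx" using True nx0 by (metis mult.commute mult_left_mono)
    ultimately show ?thesis using cs by (simp add: y0)
  next
    case False
    hence nap: "na > 0" "na - tau > 0" using tau by auto
    have yd: "\<And>t. y t = a t * ((na - tau) / na)" unfolding y_def soft_thr_def Let_def na_def[symmetric]
      using nap by auto
    have ssa: "(\<Sum>t<k. (a t)^2) = na^2" unfolding na_def by (simp add: sum_nonneg)
    have "(\<Sum>t<k. (y t)^2) = ((na - tau) / na)^2 * (\<Sum>t<k. (a t)^2)"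
      unfolding yd sum_distrib_left by (intro sum.cong refl) (simp add: power_mult_distrib power_divide)
    hence ny: "sqrt (\<Sum>t<k. (y t)^2) = na - tau" using nap ssa by (simp add: real_sqrt_mult)
    have ya: "\<And>t. y t - a t = - (tau / na) * a t" using nap by (simp add: yd field_simps)
    have "(\<Sum>t<k. (x t - y t) * (y t - a t)) = - (tau/na) * (\<Sum>t<k. x t * a t) + (tau/na) * ((na - tau)/na) * (\<Sum>t<k. (a t)^2)"
    proof -
      have pt: "\<And>t. (x t - y t) * (y t - a t) = - (tau/na) * (x t * a t) + (tau/na) * ((na - tau)/na) * (a t)^2"
        unfolding ya using nap by (simp add: yd power2_eq_square field_simps)
      show ?thesis by (simp only: pt sum_distrib_left sum.distrib[symmetric])
    qed
    also have "\<dots> = - (tau/na) * (\<Sum>t<k. x t * a t) + tau * (na - tau)"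
      using nap unfolding ssa by (simp add: power2_eq_square field_simps)
    finally have e: "(\<Sum>t<k. (x t - y t) * (y t - a t)) = - (tau/na) * (\<Sum>t<k. x t * a t) + tau * (na - tau)" .
    have "(tau/na) * (\<Sum>t<k. x t * a t) \<le> (tau/na) * (nx * na)"
      using cs nap tau by (intro mult_left_mono) auto
    also have "\<dots> = tau * nx" using nap by simp
    finally show ?thesis using e ny by simp
  qed
  ultimately show ?thesis unfolding nx_def by linarith
qed



definition Dst :: "nat \<Rightarrow> nat \<Rightarrow> (nat \<Rightarrow> nat \<Rightarrow> real) \<Rightarrow> (nat \<Rightarrow> nat \<Rightarrow> real) \<Rightarrow> real" where
  "Dst k p x y = (\<Sum>t<k. \<Sum>l<p. (x t l - y t l)^2)"

lemma prox_group':
  fixes x a y :: "nat \<Rightarrow> real" and tau :: real and k :: nat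
  assumes tau: "0 \<le> tau" and yy: "\<forall>t<k. y t = soft_thr k a tau t"
  shows "(\<Sum>t<k. (x t - y t)^2)/2 + (\<Sum>t<k. (y t - a t)^2)/2 + tau * sqrt (\<Sum>t<k. (y t)^2)
         \<le> (\<Sum>t<k. (x t - a t)^2)/2 + tau * sqrt (\<Sum>t<k. (x t)^2)"
proof -
  have e: "\<And>f. (\<Sum>t<k. f t (y t)) = (\<Sum>t<k. f t (soft_thr k a tau t))" using yy by (intro sum.cong) auto
  show ?thesis using prox_group[OF tau, where x=x and a=a and k=k] e[of "\<lambda>t v. (x t - v)^2"] e[of "\<lambda>t v. (v - a t)^2"] e[of "\<lambda>t v. v^2"]
    by simp
qed

lemma step_ineq:
  fixes k p :: nat and n :: "nat \<Rightarrow> nat" and X :: "nat \<Rightarrow> nat \<Rightarrow> nat \<Rightarrow> real"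
    and Y :: "nat \<Rightarrow> nat \<Rightarrow> real" and lam :: real and b x :: "nat \<Rightarrow> nat \<Rightarrow> real"
  assumes k: "0 < k" and lam: "0 \<le> lam" and M: "\<forall>t<k. (\<Sum>i<n t. \<Sum>j<p. (X t i j)^2) \<le> 1"
    and n0: "0 < n0 k n" and rp: "\<forall>t<k. 0 < res_norm p n X Y t (b t)"
  defines "A \<equiv> (\<Sum>t<k. 1 / (sqrt (real (n0 k n)) * res_norm p n X Y t (b t)))"
  shows "objective k p n X Y lam (sit_step k p n X Y lam b) + A/2 * Dst k p x (sit_step k p n X Y lam b)
         \<le> objective k p n X Y lam x + A/2 * Dst k p x b"
proof -
  define s0 where "s0 = sqrt (real (n0 k n))"
  have s0: "s0 > 0" using n0 unfolding s0_def by simp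
  define res where "res = res_norm p n X Y"
  define r where "r = (\<lambda>t. s0 * res t (b t))"
  define R where "R = (\<lambda>t l. (\<Sum>i<n t. X t i l * ((\<Sum>j<p. X t i j * b t j) - Y t i)) / r t)"
  define b' where "b' = sit_step k p n X Y lam b"
  have rpos: "\<And>t. t < k \<Longrightarrow> r t > 0" using rp s0 unfolding r_def res_def by simp
  have A_def': "A = (\<Sum>t<k. 1 / r t)" unfolding A_def r_def s0_def res_def ..
  have Apos: "A > 0" unfolding A_def' using k rpos by (intro sum_pos) auto
  have rA: "\<And>t. t < k \<Longrightarrow> 1 / r t \<le> A" unfolding A_def'
    using rpos by (intro member_le_sum) (auto intro: less_imp_le)
  have b'_eq: "\<And>t l. t < k \<Longrightarrow> l < p \<Longrightarrow> b' t l = soft_thr k (\<lambda>s. b s l - R s l / A) (lam / A) t"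
    unfolding b'_def sit_step_def Let_def R_def r_def A_def' s0_def res_def by simp
  define u where "u = (\<lambda>t i. (\<Sum>j<p. X t i j * b t j) - Y t i)"
  define w where "w = (\<lambda>z t i. (\<Sum>j<p. X t i j * (z t j - b t j)))"
  have uw: "\<And>z t. res t (z t) = sqrt (\<Sum>i<n t. (u t i + w z t i)^2)"
  proof -
    fix z t
    have "\<And>i. (\<Sum>j<p. X t i j * z t j) - Y t i = u t i + w z t i"
      unfolding u_def w_def by (simp add: algebra_simps sum_subtractf)
    thus "res t (z t) = sqrt (\<Sum>i<n t. (u t i + w z t i)^2)"
      unfolding res_def res_norm_def by simp
  qed
  have ub: "\<And>t. res t (b t) = sqrt (\<Sum>i<n t. (u t i)^2)"
    unfolding res_def res_norm_def u_def by simp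
  have Sw: "\<And>z t. t < k \<Longrightarrow> (\<Sum>i<n t. u t i * w z t i) = r t * (\<Sum>l<p. R t l * (z t l - b t l))"
  proof -
    fix z t assume t: "t < k"
    have "(\<Sum>i<n t. u t i * w z t i) = (\<Sum>l<p. (z t l - b t l) * (\<Sum>i<n t. X t i l * u t i))"
      unfolding w_def by (rule swap_sum)
    also have "\<dots> = (\<Sum>l<p. (z t l - b t l) * (r t * R t l))"
      using rpos[OF t] unfolding R_def u_def by simp
    also have "\<dots> = r t * (\<Sum>l<p. R t l * (z t l - b t l))"
      by (simp add: sum_distrib_left mult_ac)
    finally show "(\<Sum>i<n t. u t i * w z t i) = r t * (\<Sum>l<p. R t l * (z t l - b t l))" .
  qed
  have H1: "\<And>z t. t < k \<Longrightarrow> res t (b t) / s0 + (\<Sum>l<p. R t l * (z t l - b t l)) \<le> res t (z t) / s0"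
  proof -
    fix z t assume t: "t < k"
    have pos: "sqrt (\<Sum>i<n t. (u t i)^2) > 0" using rp t unfolding ub[symmetric] res_def by simp
    have "sqrt (\<Sum>i<n t. (u t i)^2) + (\<Sum>i<n t. u t i * w z t i) / sqrt (\<Sum>i<n t. (u t i)^2)
            \<le> sqrt (\<Sum>i<n t. (u t i + w z t i)^2)" by (rule G_lower[OF pos])
    hence "res t (b t) + (r t * (\<Sum>l<p. R t l * (z t l - b t l))) / res t (b t) \<le> res t (z t)"
      by (simp only: ub uw[where z=z and t=t] Sw[OF t])
    hence "(res t (b t) + (r t * (\<Sum>l<p. R t l * (z t l - b t l))) / res t (b t)) / s0 \<le> res t (z t) / s0"
      using s0 by (simp add: divide_right_mono)
    moreover have "(res t (b t) + (r t * (\<Sum>l<p. R t l * (z t l - b t l))) / res t (b t)) / s0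
        = res t (b t) / s0 + (\<Sum>l<p. R t l * (z t l - b t l))"
      using s0 pos unfolding r_def ub[symmetric] by (simp add: field_simps)
    ultimately show "res t (b t) / s0 + (\<Sum>l<p. R t l * (z t l - b t l)) \<le> res t (z t) / s0" by simp
  qed
  have H2: "\<And>t. t < k \<Longrightarrow> res t (b' t) / s0 \<le> res t (b t) / s0 + (\<Sum>l<p. R t l * (b' t l - b t l))
              + A / 2 * (\<Sum>l<p. (b' t l - b t l)^2)"
  proof -
    fix t assume t: "t < k"
    have pos: "sqrt (\<Sum>i<n t. (u t i)^2) > 0" using rp t unfolding ub[symmetric] res_def by simp
    have "sqrt (\<Sum>i<n t. (u t i + w b' t i)^2) \<le> sqrt (\<Sum>i<n t. (u t i)^2) + (\<Sum>i<n t. u t i * w b' t i) / sqrt (\<Sum>i<n t. (u t i)^2)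
          + (\<Sum>i<n t. (w b' t i)^2) / (2 * sqrt (\<Sum>i<n t. (u t i)^2))" by (rule G_upper[OF pos])
    hence e1: "res t (b' t) \<le> res t (b t) + (r t * (\<Sum>l<p. R t l * (b' t l - b t l))) / res t (b t)
          + (\<Sum>i<n t. (w b' t i)^2) / (2 * res t (b t))"
      by (simp only: ub uw[where z="b'" and t=t] Sw[OF t])
    have fr: "(\<Sum>i<n t. (w b' t i)^2) \<le> (\<Sum>l<p. (b' t l - b t l)^2)"
    proof -
      have "(\<Sum>i<n t. (w b' t i)^2) \<le> (\<Sum>i<n t. \<Sum>j<p. (X t i j)^2) * (\<Sum>j<p. (b' t j - b t j)^2)"
        unfolding w_def by (rule frob)
      also have "\<dots> \<le> 1 * (\<Sum>j<p. (b' t j - b t j)^2)"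
        using M t by (intro mult_right_mono) (auto intro: sum_nonneg)
      finally show ?thesis by simp
    qed
    have rb: "res t (b t) > 0" using pos ub by simp
    have "res t (b' t) / s0 \<le> (res t (b t) + (r t * (\<Sum>l<p. R t l * (b' t l - b t l))) / res t (b t)
          + (\<Sum>i<n t. (w b' t i)^2) / (2 * res t (b t))) / s0"
      using e1 s0 by (simp add: divide_right_mono)
    also have "\<dots> = res t (b t) / s0 + (\<Sum>l<p. R t l * (b' t l - b t l)) + (\<Sum>i<n t. (w b' t i)^2) / (2 * r t)"
      using s0 rb unfolding r_def by (simp add: field_simps)
    also have "(\<Sum>i<n t. (w b' t i)^2) / (2 * r t) \<le> (\<Sum>l<p. (b' t l - b t l)^2) * (1 / r t) / 2"
      using fr rpos[OF t] by (simp add: divide_right_mono mult.commute)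
    also have "\<dots> \<le> (\<Sum>l<p. (b' t l - b t l)^2) * A / 2"
      using rA[OF t] by (intro divide_right_mono mult_left_mono) (auto intro: sum_nonneg)
    finally show "res t (b' t) / s0 \<le> res t (b t) / s0 + (\<Sum>l<p. R t l * (b' t l - b t l))
              + A / 2 * (\<Sum>l<p. (b' t l - b t l)^2)" by (simp add: mult_ac)
  qed
  define a where "a = (\<lambda>l s. b s l - R s l / A)"
  have E: "\<And>z l. A * ((\<Sum>t<k. (z t l - a l t)^2) / 2) = A / 2 * (\<Sum>t<k. (z t l - b t l)^2)
       + (\<Sum>t<k. R t l * (z t l - b t l)) + (\<Sum>t<k. (R t l)^2) / (2 * A)"
  proof -
    fix z :: "nat \<Rightarrow> nat \<Rightarrow> real" and l
    have pt: "\<And>t. A * ((z t l - a l t)^2 / 2) = A / 2 * (z t l - b t l)^2 + R t l * (z t l - b t l) + (R t l)^2 / (2 * A)"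
      using Apos unfolding a_def by (simp add: power2_eq_square field_simps)
    have "A * ((\<Sum>t<k. (z t l - a l t)^2) / 2) = (\<Sum>t<k. A * ((z t l - a l t)^2 / 2))"
      by (simp add: sum_distrib_left sum_divide_distrib)
    also have "\<dots> = (\<Sum>t<k. A / 2 * (z t l - b t l)^2 + R t l * (z t l - b t l) + (R t l)^2 / (2 * A))"
      by (simp only: pt)
    also have "\<dots> = A / 2 * (\<Sum>t<k. (z t l - b t l)^2)
       + (\<Sum>t<k. R t l * (z t l - b t l)) + (\<Sum>t<k. (R t l)^2) / (2 * A)"
      by (simp add: sum.distrib sum_distrib_left sum_divide_distrib)
    finally show "A * ((\<Sum>t<k. (z t l - a l t)^2) / 2) = A / 2 * (\<Sum>t<k. (z t l - b t l)^2)
       + (\<Sum>t<k. R t l * (z t l - b t l)) + (\<Sum>t<k. (R t l)^2) / (2 * A)" .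
  qed
  have Pl: "A / 2 * (\<Sum>t<k. (x t l - b' t l)^2) + A / 2 * (\<Sum>t<k. (b' t l - b t l)^2)
      + (\<Sum>t<k. R t l * (b' t l - b t l)) + lam * sqrt (\<Sum>t<k. (b' t l)^2)
      \<le> A / 2 * (\<Sum>t<k. (x t l - b t l)^2) + (\<Sum>t<k. R t l * (x t l - b t l)) + lam * sqrt (\<Sum>t<k. (x t l)^2)" if l: "l < p" for l
  proof -
    have pr: "(\<Sum>t<k. (x t l - b' t l)^2)/2 + (\<Sum>t<k. (b' t l - a l t)^2)/2 + (lam / A) * sqrt (\<Sum>t<k. (b' t l)^2)
         \<le> (\<Sum>t<k. (x t l - a l t)^2)/2 + (lam / A) * sqrt (\<Sum>t<k. (x t l)^2)"
      using lam Apos b'_eq l unfolding a_def by (intro prox_group') auto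
    hence "A * ((\<Sum>t<k. (x t l - b' t l)^2)/2 + (\<Sum>t<k. (b' t l - a l t)^2)/2 + (lam / A) * sqrt (\<Sum>t<k. (b' t l)^2))
         \<le> A * ((\<Sum>t<k. (x t l - a l t)^2)/2 + (lam / A) * sqrt (\<Sum>t<k. (x t l)^2))"
      using Apos by (intro mult_left_mono) auto
    hence "A * ((\<Sum>t<k. (x t l - b' t l)^2)/2) + A * ((\<Sum>t<k. (b' t l - a l t)^2)/2) + lam * sqrt (\<Sum>t<k. (b' t l)^2)
         \<le> A * ((\<Sum>t<k. (x t l - a l t)^2)/2) + lam * sqrt (\<Sum>t<k. (x t l)^2)"
      using Apos by (simp add: distrib_left)
    thus ?thesis unfolding E[of b' l] E[of x l] by simp
  qed
  define DD where "DD = Dst k p"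
  define Lz where "Lz = (\<lambda>z. \<Sum>t<k. \<Sum>l<p. R t l * (z t l - b t l))"
  define Pen where "Pen = (\<lambda>z::nat\<Rightarrow>nat\<Rightarrow>real. \<Sum>l<p. sqrt (\<Sum>t<k. (z t l)^2))"
  define G where "G = (\<lambda>z::nat\<Rightarrow>nat\<Rightarrow>real. \<Sum>t<k. res t (z t) / s0)"
  have obj: "\<And>z. objective k p n X Y lam z = G z + lam * Pen z"
    unfolding objective_def G_def Pen_def res_def s0_def by (simp add: sum_divide_distrib)
  have swD: "\<And>z y. (\<Sum>l<p. \<Sum>t<k. (z t l - y t l)^2) = DD z y"
    unfolding DD_def Dst_def by (rule sum.swap)
  have swL: "\<And>z. (\<Sum>l<p. \<Sum>t<k. R t l * (z t l - b t l)) = Lz z"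
    unfolding Lz_def by (rule sum.swap)
  have PS: "A / 2 * DD x b' + A / 2 * DD b' b + Lz b' + lam * Pen b' \<le> A / 2 * DD x b + Lz x + lam * Pen x"
  proof -
    have "(\<Sum>l<p. A / 2 * (\<Sum>t<k. (x t l - b' t l)^2) + A / 2 * (\<Sum>t<k. (b' t l - b t l)^2)
      + (\<Sum>t<k. R t l * (b' t l - b t l)) + lam * sqrt (\<Sum>t<k. (b' t l)^2))
      \<le> (\<Sum>l<p. A / 2 * (\<Sum>t<k. (x t l - b t l)^2) + (\<Sum>t<k. R t l * (x t l - b t l)) + lam * sqrt (\<Sum>t<k. (x t l)^2))"
      using Pl by (intro sum_mono) auto
    thus ?thesis unfolding sum.distrib sum_distrib_left[symmetric] swD swL Pen_def .
  qed
  have GS1: "G b + Lz x \<le> G x"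
  proof -
    have "(\<Sum>t<k. res t (b t) / s0 + (\<Sum>l<p. R t l * (x t l - b t l))) \<le> (\<Sum>t<k. res t (x t) / s0)"
      using H1 by (intro sum_mono) auto
    thus ?thesis unfolding G_def Lz_def sum.distrib .
  qed
  have GS2: "G b' \<le> G b + Lz b' + A / 2 * DD b' b"
  proof -
    have "(\<Sum>t<k. res t (b' t) / s0) \<le> (\<Sum>t<k. res t (b t) / s0 + (\<Sum>l<p. R t l * (b' t l - b t l))
              + A / 2 * (\<Sum>l<p. (b' t l - b t l)^2))"
      using H2 by (intro sum_mono) auto
    thus ?thesis unfolding G_def Lz_def DD_def Dst_def sum.distrib sum_distrib_left[symmetric] .
  qed
  show ?thesis unfolding b'_def[symmetric] DD_def[symmetric] obj using PS GS1 GS2 by linarith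
qed



lemma subseq_coords:
  fixes z :: "nat \<Rightarrow> nat \<Rightarrow> nat \<Rightarrow> real" and S :: "(nat \<times> nat) set"
  assumes "finite S" and "\<forall>(t,l)\<in>S. \<exists>B. \<forall>j. \<bar>z j t l\<bar> \<le> B"
  shows "\<exists>\<phi> c. strict_mono \<phi> \<and> (\<forall>(t,l)\<in>S. (\<lambda>j. z (\<phi> j) t l) \<longlonglongrightarrow> c t l)"
  using assms
proof (induction S rule: finite_induct)
  case empty
  show ?case by (rule exI[of _ id]) (auto simp: strict_mono_def)
next
  case (insert q S)
  obtain t0 l0 where q: "q = (t0, l0)" by (cases q)
  from insert obtain \<phi> c where phi: "strict_mono \<phi>" and cv: "\<forall>(t,l)\<in>S. (\<lambda>j. z (\<phi> j) t l) \<longlonglongrightarrow> c t l"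
    by auto
  from insert.prems q obtain B where B: "\<And>j. \<bar>z j t0 l0\<bar> \<le> B" by auto
  obtain \<psi> where psi: "strict_mono \<psi>" and ms: "monoseq (\<lambda>j. z (\<phi> (\<psi> j)) t0 l0)"
    using seq_monosub[of "\<lambda>j. z (\<phi> j) t0 l0"] by auto
  obtain L where L: "(\<lambda>j. z (\<phi> (\<psi> j)) t0 l0) \<longlonglongrightarrow> L"
    using monoseq_convergent[OF ms, of B] B by blast
  define c' where "c' = (\<lambda>t l. if (t, l) = (t0, l0) then L else c t l)"
  have "strict_mono (\<lambda>j. \<phi> (\<psi> j))" by (rule strict_mono_compose[OF phi psi])
  moreover have "\<forall>(t,l)\<in>insert q S. (\<lambda>j. z (\<phi> (\<psi> j)) t l) \<longlonglongrightarrow> c' t l"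
  proof (intro ballI, clarify)
    fix t l assume tl: "(t, l) \<in> insert q S"
    show "(\<lambda>j. z (\<phi> (\<psi> j)) t l) \<longlonglongrightarrow> c' t l"
    proof (cases "(t, l) = (t0, l0)")
      case True
      hence "t = t0" "l = l0" by auto
      thus ?thesis using L by (simp add: c'_def)
    next
      case False
      hence "(t, l) \<in> S" using tl q by auto
      hence "(\<lambda>j. z (\<phi> j) t l) \<longlonglongrightarrow> c t l" using cv by auto
      hence "((\<lambda>j. z (\<phi> j) t l) \<circ> \<psi>) \<longlonglongrightarrow> c t l" by (rule LIMSEQ_subseq_LIMSEQ[OF _ psi])
      moreover have "c' t l = c t l" using False unfolding c'_def by auto
      ultimately show ?thesis by (simp add: o_def)
    qed
  qed
  ultimately show ?case by blast
qed

lemma obj_cont: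
  fixes z :: "nat \<Rightarrow> nat \<Rightarrow> nat \<Rightarrow> real"
  assumes "\<forall>t<k. \<forall>l<p. (\<lambda>j. z j t l) \<longlonglongrightarrow> c t l"
  shows "(\<lambda>j. objective k p n X Y lam (z j)) \<longlonglongrightarrow> objective k p n X Y lam c"
  unfolding objective_def res_norm_def divide_inverse
  using assms by (intro tendsto_intros) auto

lemma coord_le_pen:
  fixes z :: "nat \<Rightarrow> nat \<Rightarrow> real"
  assumes "t < k" "l < p"
  shows "\<bar>z t l\<bar> \<le> (\<Sum>l<p. sqrt (\<Sum>t<k. (z t l)^2))"
proof -
  have "\<bar>z t l\<bar> = sqrt ((z t l)^2)" by simp
  also have "\<dots> \<le> sqrt (\<Sum>t<k. (z t l)^2)"
    using assms by (intro real_sqrt_le_mono member_le_sum) auto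
  also have "\<dots> \<le> (\<Sum>l<p. sqrt (\<Sum>t<k. (z t l)^2))"
    using assms by (intro member_le_sum) (auto intro: sum_nonneg)
  finally show ?thesis .
qed

lemma obj_nonneg:
  assumes "0 \<le> lam"
  shows "0 \<le> objective k p n X Y lam z"
  unfolding objective_def res_norm_def using assms
  by (intro add_nonneg_nonneg divide_nonneg_nonneg sum_nonneg mult_nonneg_nonneg) (auto intro: sum_nonneg)

lemma obj_coord:
  assumes "0 < lam" "t < k" "l < p"
  shows "lam * \<bar>z t l\<bar> \<le> objective k p n X Y lam z"
proof -
  have "lam * \<bar>z t l\<bar> \<le> lam * (\<Sum>l<p. sqrt (\<Sum>t<k. (z t l)^2))"
    using assms coord_le_pen[of t k l p z] by (intro mult_left_mono) auto
  moreover have "0 \<le> (\<Sum>t<k. res_norm p n X Y t (z t)) / sqrt (real (n0 k n))"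
    unfolding res_norm_def by (intro divide_nonneg_nonneg sum_nonneg) (auto intro: sum_nonneg)
  ultimately show ?thesis unfolding objective_def by linarith
qed

lemma exists_min:
  assumes lam: "0 < lam"
  shows "\<exists>xs. \<forall>z. objective k p n X Y lam xs \<le> objective k p n X Y lam z"
proof -
  let ?F = "objective k p n X Y lam"
  define Fs where "Fs = Inf (range ?F)"
  have bdd: "bdd_below (range ?F)" using obj_nonneg lam by (intro bdd_belowI[of _ 0]) auto
  have Fs_le: "\<And>z. Fs \<le> ?F z" unfolding Fs_def using bdd by (intro cInf_lower) auto
  have "\<forall>j. \<exists>z. ?F z < Fs + 1 / (real j + 1)"
  proof
    fix j :: nat
    have "Inf (range ?F) < Fs + 1 / (real j + 1)" unfolding Fs_def by simp
    then obtain v where "v \<in> range ?F" "v < Fs + 1 / (real j + 1)"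
      using cInf_lessD[of "range ?F"] by blast
    thus "\<exists>z. ?F z < Fs + 1 / (real j + 1)" by auto
  qed
  then obtain z where z: "\<And>j. ?F (z j) < Fs + 1 / (real j + 1)" by metis
  have "\<forall>(t,l)\<in>{..<k}\<times>{..<p}. \<exists>B. \<forall>j. \<bar>z j t l\<bar> \<le> B"
  proof (clarify)
    fix t l assume tl: "t < k" "l < p"
    have "\<And>j. \<bar>z j t l\<bar> \<le> (Fs + 1) / lam"
    proof -
      fix j
      have "lam * \<bar>z j t l\<bar> \<le> ?F (z j)" by (rule obj_coord[OF lam tl])
      also have "\<dots> \<le> Fs + 1" using z[of j] by (smt (verit) divide_le_eq_1_pos of_nat_0_le_iff)
      finally show "\<bar>z j t l\<bar> \<le> (Fs + 1) / lam" using lam by (simp add: le_divide_eq mult.commute)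
    qed
    thus "\<exists>B. \<forall>j. \<bar>z j t l\<bar> \<le> B" by blast
  qed
  then obtain \<phi> c where phi: "strict_mono \<phi>" and cv: "\<forall>(t,l)\<in>{..<k}\<times>{..<p}. (\<lambda>j. z (\<phi> j) t l) \<longlonglongrightarrow> c t l"
    using subseq_coords[of "{..<k}\<times>{..<p}" z] by auto
  have lim: "(\<lambda>j. ?F (z (\<phi> j))) \<longlonglongrightarrow> ?F c" using cv by (intro obj_cont) auto
  have lim2: "(\<lambda>j. Fs + 1 / (real j + 1)) \<longlonglongrightarrow> Fs + 0"
  proof (intro tendsto_intros)
    show "(\<lambda>j. 1 / (real j + 1)) \<longlonglongrightarrow> 0"
      using LIMSEQ_inverse_real_of_nat by (simp add: inverse_eq_divide add.commute)
  qed
  have "?F c \<le> Fs + 0"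
  proof (rule LIMSEQ_le[OF lim lim2], intro exI allI impI)
    fix j :: nat
    have "?F (z (\<phi> j)) < Fs + 1 / (real (\<phi> j) + 1)" by (rule z)
    also have "\<dots> \<le> Fs + 1 / (real j + 1)"
      using seq_suble[OF phi, of j] by (simp add: frac_le)
    finally show "?F (z (\<phi> j)) \<le> Fs + 1 / (real j + 1)" by simp
  qed
  thus ?thesis using Fs_le by (intro exI[of _ c] allI) (metis add_0_right order_trans)
qed



lemma coord_le_Dst:
  assumes "t < k" "l < p"
  shows "(x t l - y t l)^2 \<le> Dst k p x y"
proof -
  have "(x t l - y t l)^2 \<le> (\<Sum>l<p. (x t l - y t l)^2)" using assms by (intro member_le_sum) auto
  also have "\<dots> \<le> Dst k p x y" unfolding Dst_def using assms
    by (intro member_le_sum[of t "{..<k}" "\<lambda>t. \<Sum>l<p. (x t l - y t l)^2"]) (auto intro: sum_nonneg)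
  finally show ?thesis .
qed

lemma Dst_nonneg: "0 \<le> Dst k p x y" unfolding Dst_def by (intro sum_nonneg zero_le_power2)

lemma conv_generic:
  fixes k p :: nat and n :: "nat \<Rightarrow> nat" and X :: "nat \<Rightarrow> nat \<Rightarrow> nat \<Rightarrow> real"
    and Y :: "nat \<Rightarrow> nat \<Rightarrow> real" and lam c :: real and b :: "nat \<Rightarrow> nat \<Rightarrow> nat \<Rightarrow> real"
  assumes k: "0 < k" and lam: "0 < lam" and M: "\<forall>t<k. (\<Sum>i<n t. \<Sum>j<p. (X t i j)^2) \<le> 1"
    and n0: "0 < n0 k n" and c: "0 < c"
    and rc: "\<forall>m. \<forall>t<k. c \<le> res_norm p n X Y t (b m t)"
    and bs: "\<forall>m. b (Suc m) = sit_step k p n X Y lam (b m)"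
  shows "\<exists>bstar. (\<forall>z. objective k p n X Y lam bstar \<le> objective k p n X Y lam z)
            \<and> (\<forall>t<k. \<forall>l<p. (\<lambda>m. b m t l) \<longlonglongrightarrow> bstar t l)"
proof -
  define F where "F = objective k p n X Y lam"
  define s0 where "s0 = sqrt (real (n0 k n))"
  have s0: "s0 > 0" using n0 unfolding s0_def by simp
  define A where "A = (\<lambda>m. \<Sum>t<k. 1 / (s0 * res_norm p n X Y t (b m t)))"
  define Amax where "Amax = real k * (1 / (s0 * c))"
  have rpos: "\<And>m t. t < k \<Longrightarrow> 0 < res_norm p n X Y t (b m t)"
    using rc c by (meson order_less_le_trans)
  have Apos: "\<And>m. A m > 0" unfolding A_def using k rpos s0
    by (intro sum_pos) auto
  have Abd: "\<And>m. A m \<le> Amax"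
  proof -
    fix m
    have "A m \<le> real (card {..<k}) * (1 / (s0 * c))" unfolding A_def
    proof (rule sum_bounded_above)
      fix t assume "t \<in> {..<k}"
      hence "c \<le> res_norm p n X Y t (b m t)" using rc by auto
      thus "1 / (s0 * res_norm p n X Y t (b m t)) \<le> 1 / (s0 * c)"
        using s0 c by (intro divide_left_mono mult_left_mono mult_pos_pos) auto
    qed
    thus "A m \<le> Amax" unfolding Amax_def by simp
  qed
  have KS: "\<And>m x. F (b (Suc m)) + A m / 2 * Dst k p x (b (Suc m)) \<le> F x + A m / 2 * Dst k p x (b m)"
  proof -
    fix m x
    have rp: "\<forall>t<k. 0 < res_norm p n X Y t (b m t)" using rpos by auto
    show "F (b (Suc m)) + A m / 2 * Dst k p x (b (Suc m)) \<le> F x + A m / 2 * Dst k p x (b m)"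
      unfolding F_def A_def s0_def bs[rule_format]
      by (rule step_ineq[OF k less_imp_le[OF lam] M n0 rp])
  qed
  have fejer: "\<And>x m. (\<forall>z. F x \<le> F z) \<Longrightarrow> Dst k p x (b (Suc m)) \<le> Dst k p x (b m)"
  proof -
    fix x m assume "\<forall>z. F x \<le> F z"
    hence "F x \<le> F (b (Suc m))" by auto
    hence "A m / 2 * Dst k p x (b (Suc m)) \<le> A m / 2 * Dst k p x (b m)" using KS[of m x] by linarith
    thus "Dst k p x (b (Suc m)) \<le> Dst k p x (b m)" using Apos[of m] by simp
  qed
  obtain xs where xs: "\<forall>z. F xs \<le> F z" using exists_min[OF lam] unfolding F_def by blast
  define D where "D = (\<lambda>m. Dst k p xs (b m))"
  have Ddec: "decseq D" unfolding D_def using fejer[OF xs] by (intro decseq_SucI) auto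
  have Dle: "\<And>m. D m \<le> D 0" using Ddec by (simp add: decseqD)
  have "\<forall>(t,l)\<in>{..<k}\<times>{..<p}. \<exists>B. \<forall>m. \<bar>b m t l\<bar> \<le> B"
  proof clarify
    fix t l assume tl: "t < k" "l < p"
    have "\<And>m. \<bar>b m t l\<bar> \<le> \<bar>xs t l\<bar> + sqrt (D 0)"
    proof -
      fix m
      have "(xs t l - b m t l)^2 \<le> D 0" using coord_le_Dst[OF tl, of xs "b m"] Dle[of m] unfolding D_def by linarith
      hence "sqrt ((xs t l - b m t l)^2) \<le> sqrt (D 0)" by (rule real_sqrt_le_mono)
      hence "\<bar>xs t l - b m t l\<bar> \<le> sqrt (D 0)" by simp
      thus "\<bar>b m t l\<bar> \<le> \<bar>xs t l\<bar> + sqrt (D 0)" by linarith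
    qed
    thus "\<exists>B. \<forall>m. \<bar>b m t l\<bar> \<le> B" by blast
  qed
  then obtain \<phi> bb where phi: "strict_mono \<phi>" and cv: "\<forall>(t,l)\<in>{..<k}\<times>{..<p}. (\<lambda>j. b (\<phi> j) t l) \<longlonglongrightarrow> bb t l"
    using subseq_coords[of "{..<k}\<times>{..<p}" b] by auto
  have D0: "\<forall>i. 0 \<le> D i" unfolding D_def using Dst_nonneg by blast
  obtain L where L: "D \<longlonglongrightarrow> L" "\<forall>i. L \<le> D i" by (rule decseq_convergent[OF Ddec D0])
  have dlim: "(\<lambda>m. Amax / 2 * (D m - D (Suc m))) \<longlonglongrightarrow> Amax / 2 * (L - L)"
    by (rule tendsto_mult[OF tendsto_const tendsto_diff[OF L(1) LIMSEQ_Suc[OF L(1)]]])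
  have Fsuc: "(\<lambda>m. F (b (Suc m)) - F xs) \<longlonglongrightarrow> 0"
  proof (rule real_tendsto_sandwich[OF _ _ tendsto_const])
    show "\<forall>\<^sub>F m in sequentially. 0 \<le> F (b (Suc m)) - F xs" using xs by (intro always_eventually allI) simp
    show "(\<lambda>m. Amax / 2 * (D m - D (Suc m))) \<longlonglongrightarrow> 0" using dlim by simp
    show "\<forall>\<^sub>F m in sequentially. F (b (Suc m)) - F xs \<le> Amax / 2 * (D m - D (Suc m))"
    proof (intro always_eventually allI)
      fix m
      have d0: "0 \<le> D m - D (Suc m)" using fejer[OF xs, of m] unfolding D_def by simp
      have "F (b (Suc m)) - F xs \<le> A m / 2 * (D m - D (Suc m))" using KS[of m xs] unfolding D_def right_diff_distrib
        by linarith
      also have "\<dots> \<le> Amax / 2 * (D m - D (Suc m))"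
      proof -
        have "A m / 2 \<le> Amax / 2" using Abd[of m] by simp
        thus ?thesis using d0 by (rule mult_right_mono)
      qed
      finally show "F (b (Suc m)) - F xs \<le> Amax / 2 * (D m - D (Suc m))" .
    qed
  qed
  have Flim: "(\<lambda>m. F (b m)) \<longlonglongrightarrow> F xs"
  proof -
    have "(\<lambda>m. F (b (Suc m))) \<longlonglongrightarrow> F xs" by (rule LIM_zero_iff[THEN iffD1, OF Fsuc])
    thus ?thesis by (rule LIMSEQ_imp_Suc)
  qed
  have l1: "(\<lambda>j. F (b (\<phi> j))) \<longlonglongrightarrow> F bb" unfolding F_def using cv by (intro obj_cont) auto
  have l2: "(\<lambda>j. F (b (\<phi> j))) \<longlonglongrightarrow> F xs" using LIMSEQ_subseq_LIMSEQ[OF Flim phi] by (simp add: o_def)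
  have Fbb: "F bb = F xs" using LIMSEQ_unique[OF l1 l2] .
  have bbmin: "\<forall>z. F bb \<le> F z" using xs Fbb by simp
  define E where "E = (\<lambda>m. Dst k p bb (b m))"
  have Edec: "decseq E" unfolding E_def using fejer[OF bbmin] by (intro decseq_SucI) auto
  have E0': "\<forall>i. 0 \<le> E i" unfolding E_def using Dst_nonneg by blast
  obtain L' where L': "E \<longlonglongrightarrow> L'" "\<forall>i. L' \<le> E i" by (rule decseq_convergent[OF Edec E0'])
  have "(\<lambda>j. E (\<phi> j)) \<longlonglongrightarrow> (\<Sum>t<k. \<Sum>l<p. (bb t l - bb t l)^2)"
  proof -
    have "\<And>t l. t < k \<Longrightarrow> l < p \<Longrightarrow> (\<lambda>j. (bb t l - b (\<phi> j) t l)^2) \<longlonglongrightarrow> (bb t l - bb t l)^2"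
      using cv by (intro tendsto_power tendsto_diff tendsto_const) auto
    thus ?thesis unfolding E_def Dst_def by (intro tendsto_sum) auto
  qed
  hence "(\<lambda>j. E (\<phi> j)) \<longlonglongrightarrow> 0" by simp
  moreover have "(\<lambda>j. E (\<phi> j)) \<longlonglongrightarrow> L'" using LIMSEQ_subseq_LIMSEQ[OF L'(1) phi] by (simp add: o_def)
  ultimately have "L' = 0" using LIMSEQ_unique by blast
  hence E0: "E \<longlonglongrightarrow> 0" using L'(1) by simp
  have "\<forall>t<k. \<forall>l<p. (\<lambda>m. b m t l) \<longlonglongrightarrow> bb t l"
  proof (intro allI impI)
    fix t l assume t: "t < k" and l: "l < p"
    have "(\<lambda>m. \<bar>b m t l - bb t l\<bar>) \<longlonglongrightarrow> 0"
    proof (rule real_tendsto_sandwich[OF _ _ tendsto_const])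
      show "\<forall>\<^sub>F m in sequentially. 0 \<le> \<bar>b m t l - bb t l\<bar>" by simp
      show "(\<lambda>m. sqrt (E m)) \<longlonglongrightarrow> 0" using tendsto_real_sqrt[OF E0] by simp
      show "\<forall>\<^sub>F m in sequentially. \<bar>b m t l - bb t l\<bar> \<le> sqrt (E m)"
      proof (intro always_eventually allI)
        fix m
        have "(bb t l - b m t l)^2 \<le> E m" unfolding E_def by (rule coord_le_Dst[OF t l])
        hence "sqrt ((bb t l - b m t l)^2) \<le> sqrt (E m)" by (rule real_sqrt_le_mono)
        thus "\<bar>b m t l - bb t l\<bar> \<le> sqrt (E m)" by (simp add: abs_minus_commute)
      qed
    qed
    thus "(\<lambda>m. b m t l) \<longlonglongrightarrow> bb t l" by (simp add: tendsto_rabs_zero_iff LIM_zero_iff)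
  qed
  thus ?thesis using bbmin unfolding F_def by blast
qed



lemma res_scale:
  assumes K: "0 < K"
  shows "res_norm p n (\<lambda>t i j. X t i j / K) (\<lambda>t i. Y t i / K) t z = res_norm p n X Y t z / K"
proof -
  have "\<And>i. ((\<Sum>j<p. X t i j / K * z j) - Y t i / K)^2 = ((\<Sum>j<p. X t i j * z j) - Y t i)^2 / K^2"
  proof -
    fix i
    have "(\<Sum>j<p. X t i j / K * z j) = (\<Sum>j<p. X t i j * z j) / K"
      by (simp add: sum_divide_distrib)
    thus "((\<Sum>j<p. X t i j / K * z j) - Y t i / K)^2 = ((\<Sum>j<p. X t i j * z j) - Y t i)^2 / K^2"
      by (simp add: diff_divide_distrib[symmetric] power_divide)
  qed
  hence "res_norm p n (\<lambda>t i j. X t i j / K) (\<lambda>t i. Y t i / K) t z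
        = sqrt ((\<Sum>i<n t. ((\<Sum>j<p. X t i j * z j) - Y t i)^2) / K^2)"
    unfolding res_norm_def by (simp add: sum_divide_distrib)
  also have "\<dots> = res_norm p n X Y t z / K" unfolding res_norm_def using K
    by (simp add: real_sqrt_divide)
  finally show ?thesis .
qed

lemma obj_scale:
  assumes K: "0 < K"
  shows "objective k p n (\<lambda>t i j. X t i j / K) (\<lambda>t i. Y t i / K) (lam / K) z = objective k p n X Y lam z / K"
  unfolding objective_def res_scale[OF K] using K
  by (simp add: sum_divide_distrib[symmetric] add_divide_distrib)

lemma res_nonneg: "0 \<le> res_norm p n X Y t z"
  unfolding res_norm_def by (intro real_sqrt_ge_zero sum_nonneg zero_le_power2)

lemma seg_mem: "beta m t \<in> seg_set beta t"
  unfolding seg_set_def by (rule CollectI, rule exI[of _ 1], rule exI[of _ m]) auto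

theorem theorem6:
  fixes k p :: nat and n :: "nat \<Rightarrow> nat"
    and X :: "nat \<Rightarrow> nat \<Rightarrow> nat \<Rightarrow> real" and Y :: "nat \<Rightarrow> nat \<Rightarrow> real"
    and lam c0 :: real
  assumes "0 < k" and "0 < lam" and "0 < c0"
  shows "\<exists>K1>0. \<forall>K0\<ge>K1. \<forall>b0.
           (\<forall>t<k. c0 < (INF z\<in>seg_set (sit_iter k p n X Y lam K0 b0) t. res_norm p n X Y t z))
           \<longrightarrow> (\<exists>bstar. (\<forall>b. objective k p n X Y lam bstar \<le> objective k p n X Y lam b)
                  \<and> (\<forall>t<k. \<forall>l<p. (\<lambda>m. sit_iter k p n X Y lam K0 b0 m t l) \<longlonglongrightarrow> bstar t l))"
proof -
  note k = assms(1) and lam = assms(2) and c0 = assms(3)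
  define Ms where "Ms = (\<Sum>t<k. \<Sum>i<n t. \<Sum>j<p. (X t i j)^2)"
  have Ms0: "0 \<le> Ms" unfolding Ms_def by (auto intro!: sum_nonneg)
  have Mt: "\<And>t. t < k \<Longrightarrow> (\<Sum>i<n t. \<Sum>j<p. (X t i j)^2) \<le> Ms"
    unfolding Ms_def by (intro member_le_sum) (auto intro!: sum_nonneg)
  show ?thesis
  proof (intro exI[of _ "1 + Ms"] conjI allI impI)
    show "0 < 1 + Ms" using Ms0 by simp
    fix K0 b0 assume K0: "1 + Ms \<le> K0"
      and hyp: "\<forall>t<k. c0 < (INF z\<in>seg_set (sit_iter k p n X Y lam K0 b0) t. res_norm p n X Y t z)"
    have K0p: "0 < K0" using K0 Ms0 by simp
    define b where "b = sit_iter k p n X Y lam K0 b0"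
    define X' where "X' = (\<lambda>t i j. X t i j / K0)"
    define Y' where "Y' = (\<lambda>t i. Y t i / K0)"
    have bs: "\<forall>m. b (Suc m) = sit_step k p n X' Y' (lam / K0) (b m)"
      unfolding b_def sit_iter_def X'_def Y'_def by simp
    have rc0: "\<And>m t. t < k \<Longrightarrow> c0 < res_norm p n X Y t (b m t)"
    proof -
      fix m t assume t: "t < k"
      have "(INF z\<in>seg_set b t. res_norm p n X Y t z) \<le> res_norm p n X Y t (b m t)"
        by (rule cINF_lower[OF _ seg_mem]) (auto intro!: bdd_belowI[of _ 0] res_nonneg)
      moreover have "c0 < (INF z\<in>seg_set b t. res_norm p n X Y t z)" using hyp t unfolding b_def by blast
      ultimately show "c0 < res_norm p n X Y t (b m t)" by linarith
    qed
    have n0: "0 < n0 k n"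
    proof (rule ccontr)
      assume "\<not> 0 < n0 k n"
      hence z: "n0 k n = 0" by simp
      have "n0 k n \<in> n ` {..<k}" unfolding n0_def using k by (intro Min_in) auto
      then obtain t where t: "t < k" "n0 k n = n t" by blast
      have "res_norm p n X Y t (b 0 t) = 0" unfolding res_norm_def using t z by simp
      thus False using rc0[OF t(1), of 0] c0 by simp
    qed
    have K1: "1 \<le> K0" using K0 Ms0 by simp
    have KK: "K0 \<le> K0^2"
    proof -
      have "K0 * 1 \<le> K0 * K0" using K1 by (intro mult_left_mono) auto
      thus ?thesis by (simp add: power2_eq_square)
    qed
    have M': "\<forall>t<k. (\<Sum>i<n t. \<Sum>j<p. (X' t i j)^2) \<le> 1"
    proof (intro allI impI)
      fix t assume t: "t < k"
      have "(\<Sum>i<n t. \<Sum>j<p. (X' t i j)^2) = (\<Sum>i<n t. \<Sum>j<p. (X t i j)^2) / K0^2"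
        unfolding X'_def by (simp add: power_divide sum_divide_distrib)
      moreover have "(\<Sum>i<n t. \<Sum>j<p. (X t i j)^2) \<le> K0^2"
        using Mt[OF t] K0 KK by linarith
      moreover have "0 < K0^2" using K0p by simp
      ultimately show "(\<Sum>i<n t. \<Sum>j<p. (X' t i j)^2) \<le> 1" by simp
    qed
    have rc: "\<forall>m. \<forall>t<k. c0 / K0 \<le> res_norm p n X' Y' t (b m t)"
    proof (intro allI impI)
      fix m t assume t: "t < k"
      have "c0 / K0 \<le> res_norm p n X Y t (b m t) / K0"
        using rc0[OF t, of m] K0p by (intro divide_right_mono) auto
      thus "c0 / K0 \<le> res_norm p n X' Y' t (b m t)" unfolding X'_def Y'_def res_scale[OF K0p] .
    qed
    have lamK: "0 < lam / K0" using lam K0p by simp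
    have cK: "0 < c0 / K0" using c0 K0p by simp
    obtain bstar where bstar: "\<forall>z. objective k p n X' Y' (lam / K0) bstar \<le> objective k p n X' Y' (lam / K0) z"
      and cv: "\<forall>t<k. \<forall>l<p. (\<lambda>m. b m t l) \<longlonglongrightarrow> bstar t l"
      using conv_generic[OF k lamK M' n0 cK rc bs] by blast
    have "\<forall>z. objective k p n X Y lam bstar \<le> objective k p n X Y lam z"
    proof
      fix z
      have "objective k p n X Y lam bstar / K0 \<le> objective k p n X Y lam z / K0"
        using bstar unfolding X'_def Y'_def obj_scale[OF K0p] by blast
      thus "objective k p n X Y lam bstar \<le> objective k p n X Y lam z" using K0p by (simp add: divide_le_cancel)
    qed
    thus "\<exists>bstar. (\<forall>b. objective k p n X Y lam bstar \<le> objective k p n X Y lam b)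
                  \<and> (\<forall>t<k. \<forall>l<p. (\<lambda>m. sit_iter k p n X Y lam K0 b0 m t l) \<longlonglongrightarrow> bstar t l)"
      using cv unfolding b_def by blast
  qed
qed


end
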